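(* For every $m\ge1$ and every $0\le s\le m$, $$\tilde G_s(m,\{\lambda_l\}|\{\xi_k\})=\frac{1}{\sin^m\zeta}\,Z_m(\{\lambda_l\}|\{\xi_k\}).$$ In particular $\tilde G_s$ does not depend on $s$, and equivalently $$G_s(m,\{\lambda\}|\{\xi\})=\frac{1}{s!(m-s)!\,\sin^m\zeta}\,\Theta^s_m(\lambda_1,\dots,\lambda_m)\,Z_m(\{\lambda\}|\{\xi\}).$$
   Context: Fix $\zeta\in(0,\pi)$. For integers $m\ge1$, $0\le s\le m$, set $\epsilon_j=-\tfrac12$ for $j\le s$ and $\epsilon_j=+\tfrac12$ for $j>s$ ($\epsilon_j$ attached to $\lambda_j$). Define $$G_s(m,\{\lambda_j\}|\{\xi_k\})=\frac{1}{s!(m-s)!}\sum_{\sigma\in S_m}(-1)^{[\sigma]}\prod_{1\le k<j\le m}\frac{\sinh(\lambda_{\sigma(j)}-\xi_k+i\epsilon_{\sigma(j)}\zeta)\,\sinh(\lambda_{\sigma(k)}-\xi_j-i\epsilon_{\sigma(k)}\zeta)}{\sinh(\lambda_{\sigma(j)}-\lambda_{\sigma(k)}+i(\epsilon_{\sigma(j)}+\epsilon_{\sigma(k)})\zeta)}$$ ($(-1)^{[\sigma]}$ the sign of $\sigma$), and $\tilde G_s$ by $$G_s=\frac{1}{s!(m-s)!}\prod_{1\le k<j\le m}\frac{\sinh(\lambda_j-\lambda_k)}{\sinh(\lambda_j-\lambda_k+i(\epsilon_j+\epsilon_k)\zeta)\,\sinh(\lambda_j-\lambda_k-i(\epsilon_j+\epsilon_k)\zeta)}\;\tilde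 G_s.$$ The (inhomogeneous six-vertex domain-wall) partition function is $$Z_m(\{\lambda\}|\{\xi\})=\frac{\prod_{j,k=1}^m\sinh(\lambda_j-\xi_k+i\frac\zeta2)\sinh(\lambda_j-\xi_k-i\frac\zeta2)}{\prod_{1\le k<j\le m}\sinh(\lambda_j-\lambda_k)\sinh(\xi_k-\xi_j)}\det_m\mathcal M,\qquad \mathcal M_{jk}=\frac{\sin\zeta}{\sinh(\lambda_j-\xi_k+i\frac\zeta2)\sinh(\lambda_j-\xi_k-i\frac\zeta2)},$$ and $$\Theta^s_m(\lambda_1,\dots,\lambda_m)=\prod_{k=1}^s\prod_{j=s+1}^m\frac1{\sinh(\lambda_j-\lambda_k)}\prod_{m\ge j>k>s}\frac{\sinh(\lambda_j-\lambda_k)}{\sinh(\lambda_j-\lambda_k+i\zeta)\sinh(\lambda_j-\lambda_k-i\zeta)}\prod_{s\ge j>k\ge1}\frac{\sinh(\lambda_j-\lambda_k)}{\sinh(\lambda_j-\lambda_k+i\zeta)\sinh(\lambda_j-\lambda_k-i\zeta)}.$$ All identities are between meromorphic functions. *)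

theory Defs
  imports Complex_Main "HOL-Combinatorics.Permutations" "Jordan_Normal_Form.Determinant"
begin

(* Indices run over {1..m}; spectral parameters lambda, inhomogeneities xi :: nat => complex. *)

definition eps :: "nat \<Rightarrow> nat \<Rightarrow> complex" where
  "eps s j = (if j \<le> s then - 1/2 else 1/2)"

definition G :: "real \<Rightarrow> nat \<Rightarrow> nat \<Rightarrow> (nat \<Rightarrow> complex) \<Rightarrow> (nat \<Rightarrow> complex) \<Rightarrow> complex" where
  "G \<zeta> s m lam xi = 1 / (of_nat (fact s * fact (m - s))) *
     (\<Sum>\<sigma> | \<sigma> permutes {1..m}. of_int (sign \<sigma>) *
        (\<Prod>(k, j) \<in> {(k, j). 1 \<le> k \<and> k < j \<and> j \<le> m}.
           sinh (lam (\<sigma> j) - xi k + \<i> * eps s (\<sigma> j) * of_real \<zeta>) *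
           sinh (lam (\<sigma> k) - xi j - \<i> * eps s (\<sigma> k) * of_real \<zeta>) /
           sinh (lam (\<sigma> j) - lam (\<sigma> k) + \<i> * (eps s (\<sigma> j) + eps s (\<sigma> k)) * of_real \<zeta>)))"

(* G_s = 1/(s!(m-s)!) * P * Gtilde_s, P the product below; hence Gtilde_s = s!(m-s)! * G_s / P *)
definition Pfac :: "real \<Rightarrow> nat \<Rightarrow> nat \<Rightarrow> (nat \<Rightarrow> complex) \<Rightarrow> complex" where
  "Pfac \<zeta> s m lam = (\<Prod>(k, j) \<in> {(k, j). 1 \<le> k \<and> k < j \<and> j \<le> m}.
      sinh (lam j - lam k) /
      (sinh (lam j - lam k + \<i> * (eps s j + eps s k) * of_real \<zeta>) *
       sinh (lam j - lam k - \<i> * (eps s j + eps s k) * of_real \<zeta>)))"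

definition Gtilde :: "real \<Rightarrow> nat \<Rightarrow> nat \<Rightarrow> (nat \<Rightarrow> complex) \<Rightarrow> (nat \<Rightarrow> complex) \<Rightarrow> complex" where
  "Gtilde \<zeta> s m lam xi = of_nat (fact s * fact (m - s)) * G \<zeta> s m lam xi / Pfac \<zeta> s m lam"

definition Mmat :: "real \<Rightarrow> nat \<Rightarrow> (nat \<Rightarrow> complex) \<Rightarrow> (nat \<Rightarrow> complex) \<Rightarrow> complex mat" where
  "Mmat \<zeta> m lam xi = mat m m (\<lambda>(a, b).
     of_real (sin \<zeta>) / (sinh (lam (Suc a) - xi (Suc b) + \<i> * of_real \<zeta> / 2) *
                          sinh (lam (Suc a) - xi (Suc b) - \<i> * of_real \<zeta> / 2)))"

definition Z :: "real \<Rightarrow> nat \<Rightarrow> (nat \<Rightarrow> complex) \<Rightarrow> (nat \<Rightarrow> complex) \<Rightarrow> complex" where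
  "Z \<zeta> m lam xi =
     (\<Prod>j\<in>{1..m}. \<Prod>k\<in>{1..m}. sinh (lam j - xi k + \<i> * of_real \<zeta> / 2) *
                                  sinh (lam j - xi k - \<i> * of_real \<zeta> / 2)) /
     (\<Prod>(k, j) \<in> {(k, j). 1 \<le> k \<and> k < j \<and> j \<le> m}. sinh (lam j - lam k) * sinh (xi k - xi j))
     * det (Mmat \<zeta> m lam xi)"

definition Theta :: "real \<Rightarrow> nat \<Rightarrow> nat \<Rightarrow> (nat \<Rightarrow> complex) \<Rightarrow> complex" where
  "Theta \<zeta> s m lam =
     (\<Prod>k\<in>{1..s}. \<Prod>j\<in>{s+1..m}. 1 / sinh (lam j - lam k)) *
     (\<Prod>(k, j) \<in> {(k, j). s < k \<and> k < j \<and> j \<le> m}.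
        sinh (lam j - lam k) / (sinh (lam j - lam k + \<i> * of_real \<zeta>) * sinh (lam j - lam k - \<i> * of_real \<zeta>))) *
     (\<Prod>(k, j) \<in> {(k, j). 1 \<le> k \<and> k < j \<and> j \<le> s}.
        sinh (lam j - lam k) / (sinh (lam j - lam k + \<i> * of_real \<zeta>) * sinh (lam j - lam k - \<i> * of_real \<zeta>)))"

end

theory Submission
  imports Defs "HOL-Computational_Algebra.Polynomial"
begin

definition polyfun :: "nat \<Rightarrow> (complex \<Rightarrow> complex) \<Rightarrow> bool" where
  "polyfun d f \<longleftrightarrow> (\<exists>p. degree p \<le> d \<and> (\<forall>z. f z = poly p z))"

lemma polyfun_const: "polyfun d (\<lambda>z. c)"
  unfolding polyfun_def by (rule exI[of _ "[:c:]"]) simp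

lemma polyfun_lin: "polyfun 1 (\<lambda>z. c - z)"
  unfolding polyfun_def by (rule exI[of _ "[:c, -1:]"]) simp

lemma polyfun_mono: "polyfun d f \<Longrightarrow> d \<le> e \<Longrightarrow> polyfun e f"
  unfolding polyfun_def by (meson order.trans)

lemma polyfun_add: "polyfun d f \<Longrightarrow> polyfun d g \<Longrightarrow> polyfun d (\<lambda>z. f z + g z)"
  unfolding polyfun_def
  apply (elim exE conjE)
  subgoal for p q by (rule exI[of _ "p + q"]) (auto intro: order.trans[OF degree_add_le_max])
  done

lemma polyfun_diff: "polyfun d f \<Longrightarrow> polyfun d g \<Longrightarrow> polyfun d (\<lambda>z. f z - g z)"
  unfolding polyfun_def
  apply (elim exE conjE)
  subgoal for p q by (rule exI[of _ "p - q"]) (auto intro: order.trans[OF degree_diff_le_max])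
  done

lemma polyfun_mult: "polyfun d1 f \<Longrightarrow> polyfun d2 g \<Longrightarrow> polyfun (d1 + d2) (\<lambda>z. f z * g z)"
  unfolding polyfun_def
  apply (elim exE conjE)
  subgoal for p q by (rule exI[of _ "p * q"]) (auto intro: order.trans[OF degree_mult_le])
  done

lemma polyfun_sum: "finite S \<Longrightarrow> (\<And>i. i \<in> S \<Longrightarrow> polyfun d (f i)) \<Longrightarrow> polyfun d (\<lambda>z. \<Sum>i\<in>S. f i z)"
proof (induction S rule: finite_induct)
  case empty then show ?case using polyfun_const[of d 0] by simp
next
  case (insert x F)
  then show ?case using polyfun_add[of d "f x" "\<lambda>z. \<Sum>i\<in>F. f i z"] by simp
qed

lemma polyfun_prod: "finite S \<Longrightarrow> (\<And>i. i \<in> S \<Longrightarrow> polyfun (d i) (f i)) \<Longrightarrow>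
    polyfun (\<Sum>i\<in>S. d i) (\<lambda>z. \<Prod>i\<in>S. f i z)"
proof (induction S rule: finite_induct)
  case empty then show ?case using polyfun_const[of 0 1] by simp
next
  case (insert x F)
  then show ?case using polyfun_mult[of "d x" "f x" "sum d F" "\<lambda>z. \<Prod>i\<in>F. f i z"] by simp
qed

lemma polyfun_roots:
  assumes "polyfun d f" "finite R" "card R > d" "\<And>r. r \<in> R \<Longrightarrow> f r = 0"
  shows "f z = 0"
proof -
  obtain p where p: "degree p \<le> d" "\<And>z. f z = poly p z" using assms(1) unfolding polyfun_def by blast
  have "p = 0"
  proof (rule ccontr)
    assume "p \<noteq> 0"
    have "card R \<le> card {x. poly p x = 0}"
      using assms(2,4) p(2) \<open>p \<noteq> 0\<close> by (intro card_mono poly_roots_finite) auto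
    also have "\<dots> \<le> degree p" by (rule card_poly_roots_bound) fact
    finally show False using p(1) assms(3) by linarith
  qed
  then show ?thesis using p(2) by simp
qed

definition prs :: "nat \<Rightarrow> (nat \<times> nat) set" where
  "prs m = {(k, j). 1 \<le> k \<and> k < j \<and> j \<le> m}"

lemma finite_prs [simp]: "finite (prs m)"
  by (rule finite_subset[of _ "{1..m} \<times> {1..m}"]) (auto simp: prs_def)

lemma prs_Suc: "prs (Suc n) = prs n \<union> (\<lambda>k. (k, Suc n)) ` {1..n}"
  by (auto simp: prs_def)

lemma prod_prs_Suc:
  "(\<Prod>x\<in>prs (Suc n). f x) = (\<Prod>x\<in>prs n. f x) * (\<Prod>k\<in>{1..n}. f (k, Suc n))"
  unfolding prs_Suc
  by (subst prod.union_disjoint) (auto simp: prod.reindex inj_on_def prs_def[symmetric], auto simp: prs_def)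

definition Fc :: "nat \<Rightarrow> (nat \<Rightarrow> complex) \<Rightarrow> (nat \<Rightarrow> complex) \<Rightarrow> (nat \<Rightarrow> complex) \<Rightarrow> complex" where
  "Fc m X Y Zv = (\<Sum>\<sigma> | \<sigma> permutes {1..m}. of_int (sign \<sigma>) *
     (\<Prod>(k, j)\<in>prs m. (X (\<sigma> j) - Zv k) * (Y (\<sigma> k) - Zv j) / (X (\<sigma> j) - Y (\<sigma> k))))"

definition Pp :: "nat \<Rightarrow> (nat \<Rightarrow> complex) \<Rightarrow> (nat \<Rightarrow> complex) \<Rightarrow> complex" where
  "Pp m X Y = (\<Prod>a\<in>{1..m}. \<Prod>b\<in>{1..m}-{a}. X a - Y b)"

definition Vp :: "nat \<Rightarrow> (nat \<Rightarrow> complex) \<Rightarrow> complex" where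
  "Vp m Zv = (\<Prod>(k, j)\<in>prs m. Zv j - Zv k)"

definition Nc :: "nat \<Rightarrow> (nat \<Rightarrow> complex) \<Rightarrow> (nat \<Rightarrow> complex) \<Rightarrow> (nat \<Rightarrow> complex) \<Rightarrow> complex" where
  "Nc m X Y Zv = (\<Sum>\<sigma> | \<sigma> permutes {1..m}. of_int (sign \<sigma>) *
     (\<Prod>p\<in>{1..m}. \<Prod>b\<in>{1..m}-{p}. (X (\<sigma> p) - Zv b) * (Y (\<sigma> p) - Zv b)))"

lemma permutes_remove_fixed:
  assumes "p permutes {1..Suc n}" "p (Suc n) = Suc n"
  shows "p permutes {1..n}"
  using assms unfolding permutes_def
  by (metis atLeastAtMost_iff le_SucE)

lemma Vp_Suc: "Vp (Suc n) Zv = Vp n Zv * (\<Prod>k\<in>{1..n}. Zv (Suc n) - Zv k)"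
  unfolding Vp_def by (subst prod_prs_Suc) simp

lemma Vp_cong: "(\<And>k. k \<le> n \<Longrightarrow> Zv k = Zv' k) \<Longrightarrow> Vp n Zv = Vp n Zv'"
  unfolding Vp_def by (intro prod.cong) (auto simp: prs_def)

lemma Pp_Suc: "Pp (Suc n) X Y = Pp n X Y * (\<Prod>c\<in>{1..n}. (X (Suc n) - Y c) * (X c - Y (Suc n)))"
proof -
  have 1: "(\<Prod>b\<in>{1..Suc n}-{Suc n}. X (Suc n) - Y b) = (\<Prod>b\<in>{1..n}. X (Suc n) - Y b)"
    by (intro prod.cong) auto
  have 2: "(\<Prod>b\<in>{1..Suc n}-{a}. X a - Y b) = (X a - Y (Suc n)) * (\<Prod>b\<in>{1..n}-{a}. X a - Y b)"
    if "a \<in> {1..n}" for a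
  proof -
    have "{1..Suc n}-{a} = insert (Suc n) ({1..n}-{a})" using that by auto
    then show ?thesis by simp
  qed
  have "Pp (Suc n) X Y = (\<Prod>b\<in>{1..n}. X (Suc n) - Y b) *
      (\<Prod>a\<in>{1..n}. (X a - Y (Suc n)) * (\<Prod>b\<in>{1..n}-{a}. X a - Y b))"
  proof -
    have "Pp (Suc n) X Y = (\<Prod>b\<in>{1..Suc n}-{Suc n}. X (Suc n) - Y b) *
      (\<Prod>a\<in>{1..n}. \<Prod>b\<in>{1..Suc n}-{a}. X a - Y b)"
      unfolding Pp_def by (rule prod.nat_ivl_Suc') simp
    also have "\<dots> = (\<Prod>b\<in>{1..n}. X (Suc n) - Y b) *
      (\<Prod>a\<in>{1..n}. (X a - Y (Suc n)) * (\<Prod>b\<in>{1..n}-{a}. X a - Y b))"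
      by (simp only: 1 2 cong: prod.cong)
    finally show ?thesis .
  qed
  also have "\<dots> = Pp n X Y * (\<Prod>c\<in>{1..n}. (X (Suc n) - Y c) * (X c - Y (Suc n)))"
    unfolding Pp_def prod.distrib by (simp add: mult_ac)
  finally show ?thesis .
qed

lemma Pp_perm:
  assumes "\<pi> permutes {1..m}"
  shows "Pp m (X \<circ> \<pi>) (Y \<circ> \<pi>) = Pp m X Y"
proof -
  have inner: "(\<Prod>b\<in>{1..m}-{a}. X (\<pi> a) - Y (\<pi> b)) = (\<Prod>b\<in>{1..m}-{\<pi> a}. X (\<pi> a) - Y b)"
    if "a \<in> {1..m}" for a
  proof -
    have inj: "inj_on \<pi> ({1..m}-{a})" using permutes_inj[OF assms] by (auto intro: inj_on_subset)
    have img: "\<pi> ` ({1..m}-{a}) = {1..m}-{\<pi> a}"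
      using permutes_image[OF assms] permutes_inj[OF assms] by (auto simp: inj_eq)
    show ?thesis using prod.reindex[OF inj, of "\<lambda>b. X (\<pi> a) - Y b"] img by simp
  qed
  have "Pp m (X \<circ> \<pi>) (Y \<circ> \<pi>) = (\<Prod>a\<in>{1..m}. \<Prod>b\<in>{1..m}-{\<pi> a}. X (\<pi> a) - Y b)"
    unfolding Pp_def using inner by (auto intro: prod.cong)
  also have "\<dots> = Pp m X Y"
    unfolding Pp_def using prod.permute[OF assms, of "\<lambda>a. \<Prod>b\<in>{1..m}-{a}. X a - Y b"] by (simp add: o_def)
  finally show ?thesis .
qed

lemma Nc_zero:
  assumes kl: "k \<in> {1..m}" "l \<in> {1..m}" "k \<noteq> l" and Zkl: "Zv k = Zv l"
  shows "Nc m X Y Zv = 0"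
proof -
  define t where "t = Transposition.transpose k l"
  have t: "t permutes {1..m}" unfolding t_def using kl by (intro permutes_swap_id) auto
  have Zt: "Zv (t b) = Zv b" for b using Zkl unfolding t_def by (cases "b = k"; cases "b = l") auto
  define T where "T \<sigma> = (\<Prod>p\<in>{1..m}. \<Prod>b\<in>{1..m}-{p}. (X (\<sigma> p) - Zv b) * (Y (\<sigma> p) - Zv b))" for \<sigma>
  have Tt: "T (\<sigma> \<circ> t) = T \<sigma>" for \<sigma>
  proof -
    have inner: "(\<Prod>b\<in>{1..m}-{t q}. (X c - Zv b) * (Y c - Zv b)) = (\<Prod>b\<in>{1..m}-{q}. (X c - Zv b) * (Y c - Zv b))"
      if "q \<in> {1..m}" for q c
    proof -
      have inj: "inj_on t ({1..m}-{q})" using permutes_inj[OF t] by (auto intro: inj_on_subset)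
      have img: "t ` ({1..m}-{q}) = {1..m}-{t q}"
        using permutes_image[OF t] permutes_inj[OF t] by (auto simp: inj_eq)
      show ?thesis using prod.reindex[OF inj, of "\<lambda>b. (X c - Zv b) * (Y c - Zv b)"] img by (simp add: Zt)
    qed
    have "T (\<sigma> \<circ> t) = (\<Prod>p\<in>{1..m}. \<Prod>b\<in>{1..m}-{p}. (X (\<sigma> (t p)) - Zv b) * (Y (\<sigma> (t p)) - Zv b))"
      unfolding T_def by simp
    also have "\<dots> = (\<Prod>p\<in>{1..m}. \<Prod>b\<in>{1..m}-{t p}. (X (\<sigma> p) - Zv b) * (Y (\<sigma> p) - Zv b))"
      using prod.permute[OF t, of "\<lambda>p. \<Prod>b\<in>{1..m}-{t p}. (X (\<sigma> p) - Zv b) * (Y (\<sigma> p) - Zv b)"]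
      by (simp add: o_def t_def)
    also have "\<dots> = T \<sigma>" unfolding T_def by (intro prod.cong refl inner)
    finally show ?thesis .
  qed
  have st: "sign (\<sigma> \<circ> t) = - sign \<sigma>" if "\<sigma> permutes {1..m}" for \<sigma>
    using sign_compose[OF permutes_imp_permutation[OF _ that] permutes_imp_permutation[OF _ t]] kl
    by (simp add: t_def sign_swap_id)
  have "Nc m X Y Zv = (\<Sum>\<sigma> | \<sigma> permutes {1..m}. of_int (sign \<sigma>) * T \<sigma>)"
    unfolding Nc_def T_def ..
  also have "\<dots> = (\<Sum>\<sigma> | \<sigma> permutes {1..m}. of_int (sign (\<sigma> \<circ> t)) * T (\<sigma> \<circ> t))"
    by (rule sum_permutations_compose_right[OF t])
  also have "\<dots> = - (\<Sum>\<sigma> | \<sigma> permutes {1..m}. of_int (sign \<sigma>) * T \<sigma>)"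
    by (simp add: Tt st sum_negf[symmetric])
  finally show ?thesis unfolding Nc_def T_def by simp
qed

lemma sum_perm_at:
  fixes g :: "(nat \<Rightarrow> nat) \<Rightarrow> complex"
  assumes a: "a \<in> {1..Suc n}"
    and van: "\<And>\<sigma>. \<sigma> permutes {1..Suc n} \<Longrightarrow> \<sigma> (Suc n) \<noteq> a \<Longrightarrow> g \<sigma> = 0"
  shows "(\<Sum>\<sigma> | \<sigma> permutes {1..Suc n}. g \<sigma>) =
         (\<Sum>\<tau> | \<tau> permutes {1..n}. g (Transposition.transpose a (Suc n) \<circ> \<tau>))"
proof -
  define sw where "sw = Transposition.transpose a (Suc n)"
  have sw: "sw permutes {1..Suc n}" unfolding sw_def using a by (intro permutes_swap_id) auto
  have "(\<Sum>\<sigma> | \<sigma> permutes {1..Suc n}. g \<sigma>) = (\<Sum>\<sigma> \<in> {\<sigma>. \<sigma> permutes {1..Suc n} \<and> \<sigma> (Suc n) = a}. g \<sigma>)"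
    by (rule sum.mono_neutral_right) (auto intro: finite_permutations van)
  also have "\<dots> = (\<Sum>\<tau> | \<tau> permutes {1..n}. g (sw \<circ> \<tau>))"
  proof (rule sum.reindex_bij_witness[of _ "\<lambda>\<tau>. sw \<circ> \<tau>" "\<lambda>\<sigma>. sw \<circ> \<sigma>"])
    fix \<tau> assume "\<tau> \<in> {\<tau>. \<tau> permutes {1..n}}"
    then have t: "\<tau> permutes {1..n}" by simp
    then have t': "\<tau> permutes {1..Suc n}" by (rule permutes_subset) auto
    have "\<tau> (Suc n) = Suc n" using permutes_not_in[OF t] by simp
    then show "sw \<circ> \<tau> \<in> {\<sigma>. \<sigma> permutes {1..Suc n} \<and> \<sigma> (Suc n) = a}"
      using permutes_compose[OF t' sw] by (simp add: sw_def)
    show "sw \<circ> (sw \<circ> \<tau>) = \<tau>" by (simp add: sw_def fun_eq_iff)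
  next
    fix \<sigma> assume "\<sigma> \<in> {\<sigma>. \<sigma> permutes {1..Suc n} \<and> \<sigma> (Suc n) = a}"
    then have s: "\<sigma> permutes {1..Suc n}" "\<sigma> (Suc n) = a" by auto
    show "sw \<circ> (sw \<circ> \<sigma>) = \<sigma>" by (simp add: sw_def fun_eq_iff)
    show "sw \<circ> \<sigma> \<in> {\<tau>. \<tau> permutes {1..n}}"
      using permutes_remove_fixed[OF permutes_compose[OF s(1) sw]] s(2) by (simp add: sw_def)
    have "sw \<circ> (sw \<circ> \<sigma>) = \<sigma>" by (simp add: sw_def fun_eq_iff)
    then show "g (sw \<circ> (sw \<circ> \<sigma>)) = g \<sigma>" by simp
  qed
  finally show ?thesis unfolding sw_def .
qed

lemma perm_hits:
  assumes "\<sigma> permutes {1..Suc n}" "\<sigma> (Suc n) \<noteq> a" "a \<in> {1..Suc n}"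
  obtains k where "k \<in> {1..n}" "\<sigma> k = a"
proof -
  have "a \<in> \<sigma> ` {1..Suc n}" using permutes_image[OF assms(1)] assms(3) by simp
  then obtain k where "k \<in> {1..Suc n}" "\<sigma> k = a" by auto
  with assms(2) have "k \<in> {1..n}" "\<sigma> k = a" by (auto simp: le_Suc_eq)
  then show ?thesis by (rule that)
qed

lemma sign_sw_comp:
  assumes "a \<in> {1..Suc n}" "\<tau> permutes {1..n}"
  shows "sign (Transposition.transpose a (Suc n) \<circ> \<tau>) = sign (Transposition.transpose a (Suc n)) * sign \<tau>"
  by (rule sign_compose[OF permutation_swap_id permutes_imp_permutation[OF _ assms(2)]]) simp

lemma Fc_at:
  assumes a: "a \<in> {1..Suc n}"
  defines "sw \<equiv> Transposition.transpose a (Suc n)"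
  shows "Fc (Suc n) X Y (Zv(Suc n := Y a)) = of_int (sign sw) *
     ((\<Prod>k\<in>{1..n}. X a - Zv k) * (\<Prod>c\<in>{1..n}. (Y (sw c) - Y a) / (X a - Y (sw c)))) *
     Fc n (X \<circ> sw) (Y \<circ> sw) Zv"
proof -
  define Zv' where "Zv' = Zv(Suc n := Y a)"
  define g where "g \<sigma> = of_int (sign \<sigma>) *
     (\<Prod>(k, j)\<in>prs (Suc n). (X (\<sigma> j) - Zv' k) * (Y (\<sigma> k) - Zv' j) / (X (\<sigma> j) - Y (\<sigma> k)))" for \<sigma>
  define C where "C = (\<Prod>k\<in>{1..n}. X a - Zv k) * (\<Prod>c\<in>{1..n}. (Y (sw c) - Y a) / (X a - Y (sw c)))"
  have van: "g \<sigma> = 0" if s: "\<sigma> permutes {1..Suc n}" "\<sigma> (Suc n) \<noteq> a" for \<sigma>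
  proof -
    obtain k where k: "k \<in> {1..n}" "\<sigma> k = a" using perm_hits[OF s a] by blast
    have "(\<Prod>k'\<in>{1..n}. (X (\<sigma> (Suc n)) - Zv' k') * (Y (\<sigma> k') - Zv' (Suc n)) / (X (\<sigma> (Suc n)) - Y (\<sigma> k'))) = 0"
      by (rule prod_zero) (use k in \<open>auto simp: Zv'_def intro!: bexI[of _ k]\<close>)
    then show ?thesis unfolding g_def by (subst prod_prs_Suc) simp
  qed
  have trm: "g (sw \<circ> \<tau>) = of_int (sign sw) * C * (of_int (sign \<tau>) *
     (\<Prod>(k, j)\<in>prs n. ((X \<circ> sw) (\<tau> j) - Zv k) * ((Y \<circ> sw) (\<tau> k) - Zv j) / ((X \<circ> sw) (\<tau> j) - (Y \<circ> sw) (\<tau> k))))"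
    if t: "\<tau> permutes {1..n}" for \<tau>
  proof -
    have tS: "\<tau> (Suc n) = Suc n" using permutes_not_in[OF t] by simp
    have swS: "sw (Suc n) = a" by (simp add: sw_def)
    have P1: "(\<Prod>(k, j)\<in>prs n. (X ((sw \<circ> \<tau>) j) - Zv' k) * (Y ((sw \<circ> \<tau>) k) - Zv' j) / (X ((sw \<circ> \<tau>) j) - Y ((sw \<circ> \<tau>) k)))
       = (\<Prod>(k, j)\<in>prs n. ((X \<circ> sw) (\<tau> j) - Zv k) * ((Y \<circ> sw) (\<tau> k) - Zv j) / ((X \<circ> sw) (\<tau> j) - (Y \<circ> sw) (\<tau> k)))"
      by (intro prod.cong refl) (auto simp: prs_def Zv'_def)
    define h where "h c = (Y (sw c) - Y a) / (X a - Y (sw c))" for c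
    have P2: "(\<Prod>k\<in>{1..n}. (X ((sw \<circ> \<tau>) (Suc n)) - Zv' k) * (Y ((sw \<circ> \<tau>) k) - Zv' (Suc n)) / (X ((sw \<circ> \<tau>) (Suc n)) - Y ((sw \<circ> \<tau>) k)))
       = (\<Prod>k\<in>{1..n}. (X a - Zv k) * h (\<tau> k))"
      by (intro prod.cong refl) (auto simp: Zv'_def tS swS h_def)
    have P3: "(\<Prod>k\<in>{1..n}. h (\<tau> k)) = (\<Prod>c\<in>{1..n}. h c)"
      using prod.permute[OF t, of h] by (simp add: o_def)
    have "g (sw \<circ> \<tau>) = of_int (sign sw * sign \<tau>) * ((\<Prod>(k, j)\<in>prs n. ((X \<circ> sw) (\<tau> j) - Zv k) * ((Y \<circ> sw) (\<tau> k) - Zv j) / ((X \<circ> sw) (\<tau> j) - (Y \<circ> sw) (\<tau> k))) *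
        (\<Prod>k\<in>{1..n}. (X a - Zv k) * h (\<tau> k)))"
      unfolding g_def sw_def sign_sw_comp[OF a t] using P1 P2 unfolding sw_def
      by (subst prod_prs_Suc) (simp only: case_prod_conv)
    also have "\<dots> = of_int (sign sw) * C * (of_int (sign \<tau>) *
     (\<Prod>(k, j)\<in>prs n. ((X \<circ> sw) (\<tau> j) - Zv k) * ((Y \<circ> sw) (\<tau> k) - Zv j) / ((X \<circ> sw) (\<tau> j) - (Y \<circ> sw) (\<tau> k))))"
      unfolding prod.distrib P3 unfolding C_def h_def by (simp add: mult_ac)
    finally show ?thesis .
  qed
  have "Fc (Suc n) X Y Zv' = (\<Sum>\<sigma> | \<sigma> permutes {1..Suc n}. g \<sigma>)"
    unfolding Fc_def g_def ..
  also have "\<dots> = (\<Sum>\<tau> | \<tau> permutes {1..n}. g (sw \<circ> \<tau>))"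
    unfolding sw_def by (rule sum_perm_at[OF a van])
  also have "\<dots> = (\<Sum>\<tau> | \<tau> permutes {1..n}. of_int (sign sw) * C * (of_int (sign \<tau>) *
     (\<Prod>(k, j)\<in>prs n. ((X \<circ> sw) (\<tau> j) - Zv k) * ((Y \<circ> sw) (\<tau> k) - Zv j) / ((X \<circ> sw) (\<tau> j) - (Y \<circ> sw) (\<tau> k)))))"
    by (intro sum.cong refl trm) simp
  also have "\<dots> = of_int (sign sw) * C * Fc n (X \<circ> sw) (Y \<circ> sw) Zv"
    unfolding Fc_def sum_distrib_left ..
  finally show ?thesis unfolding Zv'_def C_def .
qed

lemma Nc_at:
  assumes a: "a \<in> {1..Suc n}"
  defines "sw \<equiv> Transposition.transpose a (Suc n)"
  shows "Nc (Suc n) X Y (Zv(Suc n := Y a)) = of_int (sign sw) *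
     ((\<Prod>b\<in>{1..n}. (X a - Zv b) * (Y a - Zv b)) * (\<Prod>c\<in>{1..n}. (X (sw c) - Y a) * (Y (sw c) - Y a))) *
     Nc n (X \<circ> sw) (Y \<circ> sw) Zv"
proof -
  define Zv' where "Zv' = Zv(Suc n := Y a)"
  define g where "g \<sigma> = of_int (sign \<sigma>) *
     (\<Prod>p\<in>{1..Suc n}. \<Prod>b\<in>{1..Suc n}-{p}. (X (\<sigma> p) - Zv' b) * (Y (\<sigma> p) - Zv' b))" for \<sigma>
  define C where "C = (\<Prod>b\<in>{1..n}. (X a - Zv b) * (Y a - Zv b)) * (\<Prod>c\<in>{1..n}. (X (sw c) - Y a) * (Y (sw c) - Y a))"
  have ins: "{1..Suc n}-{p} = insert (Suc n) ({1..n}-{p})" if "p \<in> {1..n}" for p using that by auto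
  have van: "g \<sigma> = 0" if s: "\<sigma> permutes {1..Suc n}" "\<sigma> (Suc n) \<noteq> a" for \<sigma>
  proof -
    obtain k where k: "k \<in> {1..n}" "\<sigma> k = a" using perm_hits[OF s a] by blast
    have "(\<Prod>b\<in>{1..Suc n}-{k}. (X (\<sigma> k) - Zv' b) * (Y (\<sigma> k) - Zv' b)) = 0"
      by (rule prod_zero) (use k in \<open>auto simp: Zv'_def intro!: bexI[of _ "Suc n"]\<close>)
    then have "(\<Prod>p\<in>{1..Suc n}. \<Prod>b\<in>{1..Suc n}-{p}. (X (\<sigma> p) - Zv' b) * (Y (\<sigma> p) - Zv' b)) = 0"
      by (intro prod_zero) (use k in auto)
    then show ?thesis unfolding g_def by simp
  qed
  have trm: "g (sw \<circ> \<tau>) = of_int (sign sw) * C * (of_int (sign \<tau>) *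
     (\<Prod>p\<in>{1..n}. \<Prod>b\<in>{1..n}-{p}. ((X \<circ> sw) (\<tau> p) - Zv b) * ((Y \<circ> sw) (\<tau> p) - Zv b)))"
    if t: "\<tau> permutes {1..n}" for \<tau>
  proof -
    have tS: "\<tau> (Suc n) = Suc n" using permutes_not_in[OF t] by simp
    have swS: "sw (Suc n) = a" by (simp add: sw_def)
    have tin: "\<tau> p \<in> {1..n}" if "p \<in> {1..n}" for p using permutes_in_image[OF t] that by simp
    define h where "h c = (X (sw c) - Y a) * (Y (sw c) - Y a)" for c
    define Q where "Q p = (\<Prod>b\<in>{1..n}-{p}. ((X \<circ> sw) (\<tau> p) - Zv b) * ((Y \<circ> sw) (\<tau> p) - Zv b))" for p
    have A1: "(\<Prod>b\<in>{1..Suc n}-{Suc n}. (X ((sw \<circ> \<tau>) (Suc n)) - Zv' b) * (Y ((sw \<circ> \<tau>) (Suc n)) - Zv' b))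
        = (\<Prod>b\<in>{1..n}. (X a - Zv b) * (Y a - Zv b))"
      by (intro prod.cong) (auto simp: tS swS Zv'_def)
    have A2: "(\<Prod>b\<in>{1..Suc n}-{p}. (X ((sw \<circ> \<tau>) p) - Zv' b) * (Y ((sw \<circ> \<tau>) p) - Zv' b))
        = h (\<tau> p) * Q p" if p: "p \<in> {1..n}" for p
    proof -
      have "(\<Prod>b\<in>{1..Suc n}-{p}. (X ((sw \<circ> \<tau>) p) - Zv' b) * (Y ((sw \<circ> \<tau>) p) - Zv' b))
         = (X ((sw \<circ> \<tau>) p) - Zv' (Suc n)) * (Y ((sw \<circ> \<tau>) p) - Zv' (Suc n)) *
           (\<Prod>b\<in>{1..n}-{p}. (X ((sw \<circ> \<tau>) p) - Zv' b) * (Y ((sw \<circ> \<tau>) p) - Zv' b))"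
        unfolding ins[OF p] by (subst prod.insert) auto
      also have "\<dots> = h (\<tau> p) * Q p"
        unfolding h_def Q_def by (intro arg_cong2[where f="(*)"] prod.cong) (auto simp: Zv'_def)
      finally show ?thesis .
    qed
    have P3: "(\<Prod>p\<in>{1..n}. h (\<tau> p)) = (\<Prod>c\<in>{1..n}. h c)"
      using prod.permute[OF t, of h] by (simp add: o_def)
    have "g (sw \<circ> \<tau>) = of_int (sign sw * sign \<tau>) *
       ((\<Prod>b\<in>{1..n}. (X a - Zv b) * (Y a - Zv b)) * (\<Prod>p\<in>{1..n}. h (\<tau> p) * Q p))"
    proof -
      have ivl: "\<And>G. prod G {1..Suc n} = G (Suc n) * prod G {1..n}" by (rule prod.nat_ivl_Suc') simp
      have sg: "sign (sw \<circ> \<tau>) = sign sw * sign \<tau>" unfolding sw_def by (rule sign_sw_comp[OF a t])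
      have A2': "(\<Prod>p\<in>{1..n}. \<Prod>b\<in>{1..Suc n}-{p}. (X ((sw \<circ> \<tau>) p) - Zv' b) * (Y ((sw \<circ> \<tau>) p) - Zv' b))
        = (\<Prod>p\<in>{1..n}. h (\<tau> p) * Q p)" by (intro prod.cong refl A2)
      show ?thesis unfolding g_def ivl sg A1 A2' ..
    qed
    also have "\<dots> = of_int (sign sw) * C * (of_int (sign \<tau>) * (\<Prod>p\<in>{1..n}. Q p))"
      unfolding prod.distrib P3 unfolding C_def h_def prod.distrib by (simp add: mult_ac)
    finally show ?thesis unfolding Q_def .
  qed
  have "Nc (Suc n) X Y Zv' = (\<Sum>\<sigma> | \<sigma> permutes {1..Suc n}. g \<sigma>)"
    unfolding Nc_def g_def ..
  also have "\<dots> = (\<Sum>\<tau> | \<tau> permutes {1..n}. g (sw \<circ> \<tau>))"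
    unfolding sw_def by (rule sum_perm_at[OF a van])
  also have "\<dots> = (\<Sum>\<tau> | \<tau> permutes {1..n}. of_int (sign sw) * C * (of_int (sign \<tau>) *
     (\<Prod>p\<in>{1..n}. \<Prod>b\<in>{1..n}-{p}. ((X \<circ> sw) (\<tau> p) - Zv b) * ((Y \<circ> sw) (\<tau> p) - Zv b))))"
    by (intro sum.cong refl trm) simp
  also have "\<dots> = of_int (sign sw) * C * Nc n (X \<circ> sw) (Y \<circ> sw) Zv"
    unfolding Nc_def sum_distrib_left ..
  finally show ?thesis unfolding Zv'_def C_def .
qed

lemma polyfun_cong: "polyfun d f \<Longrightarrow> (\<And>z. f z = g z) \<Longrightarrow> polyfun d g"
  unfolding polyfun_def by auto

lemma polyfun_lin': "polyfun 1 (\<lambda>z. z - c)"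
  unfolding polyfun_def by (rule exI[of _ "[:-c, 1:]"]) simp

lemma sum_prs_Suc:
  "(\<Sum>x\<in>prs (Suc n). f x) = (\<Sum>x\<in>prs n. f x) + (\<Sum>k\<in>{1..n}. f (k, Suc n))"
  unfolding prs_Suc
  by (subst sum.union_disjoint) (auto simp: sum.reindex inj_on_def prs_def[symmetric], auto simp: prs_def)

lemma sum_prs_deg: "(\<Sum>(k, j)\<in>prs (Suc n). if j = Suc n then 1 else 0) = (n::nat)"
proof -
  have "(\<Sum>(k, j)\<in>prs n. if j = Suc n then 1 else 0) = (0::nat)"
    by (intro sum.neutral) (auto simp: prs_def)
  then show ?thesis by (subst sum_prs_Suc) simp
qed

lemma pf_fac1: "polyfun (if j = Suc n then 1 else 0) (\<lambda>z. A * (B - (Zv(Suc n := z)) j) / C)"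
proof (cases "j = Suc n")
  case True
  have "polyfun (0 + 1) (\<lambda>z. A / C * (B - z))" by (rule polyfun_mult[OF polyfun_const polyfun_lin])
  then have "polyfun 1 (\<lambda>z. A / C * (B - z))" by simp
  then have "polyfun 1 (\<lambda>z. A * (B - z) / C)" by (rule polyfun_cong) simp
  then show ?thesis using True by simp
next
  case False
  then show ?thesis by (simp add: polyfun_const)
qed

lemma pf_fac2: "polyfun (if j = Suc n then 1 else 0) (\<lambda>z. (Zv(Suc n := z)) j - B)"
proof (cases "j = Suc n")
  case True
  show ?thesis using True polyfun_lin'[of B] by simp
next
  case False
  then show ?thesis by (simp add: polyfun_const)
qed

lemma pf_fac3: "polyfun (if j = Suc n then 2 else 0) (\<lambda>z. (A - (Zv(Suc n := z)) j) * (B - (Zv(Suc n := z)) j))"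
proof (cases "j = Suc n")
  case True
  show ?thesis using True polyfun_mult[OF polyfun_lin[of A] polyfun_lin[of B]] by (simp add: numeral_2_eq_2)
next
  case False
  then show ?thesis by (simp add: polyfun_const)
qed

lemma pf_Fc: "polyfun n (\<lambda>z. Fc (Suc n) X Y (Zv(Suc n := z)))"
  unfolding Fc_def
proof (intro polyfun_sum finite_permutations finite_atLeastAtMost)
  fix \<sigma> assume "\<sigma> \<in> {\<sigma>. \<sigma> permutes {1..Suc n}}"
  have "polyfun (\<Sum>(k, j)\<in>prs (Suc n). if j = Suc n then 1 else 0)
    (\<lambda>z. \<Prod>(k, j)\<in>prs (Suc n). (X (\<sigma> j) - (Zv(Suc n := z)) k) * (Y (\<sigma> k) - (Zv(Suc n := z)) j) / (X (\<sigma> j) - Y (\<sigma> k)))"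
  proof (rule polyfun_prod[OF finite_prs])
    fix i assume i: "i \<in> prs (Suc n)"
    obtain k j where kj: "i = (k, j)" by fastforce
    have "k \<noteq> Suc n" using i kj by (auto simp: prs_def)
    then show "polyfun (case i of (k, j) \<Rightarrow> if j = Suc n then 1 else 0)
        (\<lambda>z. case i of (k, j) \<Rightarrow> (X (\<sigma> j) - (Zv(Suc n := z)) k) * (Y (\<sigma> k) - (Zv(Suc n := z)) j) / (X (\<sigma> j) - Y (\<sigma> k)))"
      using kj pf_fac1[of j n "X (\<sigma> j) - Zv k" "Y (\<sigma> k)" Zv "X (\<sigma> j) - Y (\<sigma> k)"] by simp
  qed
  then have "polyfun n
    (\<lambda>z. \<Prod>(k, j)\<in>prs (Suc n). (X (\<sigma> j) - (Zv(Suc n := z)) k) * (Y (\<sigma> k) - (Zv(Suc n := z)) j) / (X (\<sigma> j) - Y (\<sigma> k)))"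
    by (simp only: sum_prs_deg)
  from polyfun_mult[OF polyfun_const[of 0] this]
  show "polyfun n (\<lambda>z. of_int (sign \<sigma>) * (\<Prod>(k, j)\<in>prs (Suc n). (X (\<sigma> j) - (Zv(Suc n := z)) k) * (Y (\<sigma> k) - (Zv(Suc n := z)) j) / (X (\<sigma> j) - Y (\<sigma> k))))"
    by simp
qed

lemma pf_Vp: "polyfun n (\<lambda>z. Vp (Suc n) (Zv(Suc n := z)))"
proof -
  have "polyfun (\<Sum>(k, j)\<in>prs (Suc n). if j = Suc n then 1 else 0)
    (\<lambda>z. \<Prod>(k, j)\<in>prs (Suc n). (Zv(Suc n := z)) j - (Zv(Suc n := z)) k)"
  proof (rule polyfun_prod[OF finite_prs])
    fix i assume i: "i \<in> prs (Suc n)"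
    obtain k j where kj: "i = (k, j)" by fastforce
    have "k \<noteq> Suc n" using i kj by (auto simp: prs_def)
    then show "polyfun (case i of (k, j) \<Rightarrow> if j = Suc n then 1 else 0)
        (\<lambda>z. case i of (k, j) \<Rightarrow> (Zv(Suc n := z)) j - (Zv(Suc n := z)) k)"
      using kj pf_fac2[of j n Zv "Zv k"] by simp
  qed
  then show ?thesis unfolding Vp_def by (simp only: sum_prs_deg)
qed

lemma pf_Nc: "polyfun (2 * n) (\<lambda>z. Nc (Suc n) X Y (Zv(Suc n := z)))"
  unfolding Nc_def
proof (intro polyfun_sum finite_permutations finite_atLeastAtMost)
  fix \<sigma> assume "\<sigma> \<in> {\<sigma>. \<sigma> permutes {1..Suc n}}"
  have inner: "polyfun (if p = Suc n then 0 else 2)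
     (\<lambda>z. \<Prod>b\<in>{1..Suc n}-{p}. (X (\<sigma> p) - (Zv(Suc n := z)) b) * (Y (\<sigma> p) - (Zv(Suc n := z)) b))" for p
  proof -
    have "polyfun (\<Sum>b\<in>{1..Suc n}-{p}. if b = Suc n then 2 else 0)
     (\<lambda>z. \<Prod>b\<in>{1..Suc n}-{p}. (X (\<sigma> p) - (Zv(Suc n := z)) b) * (Y (\<sigma> p) - (Zv(Suc n := z)) b))"
      by (intro polyfun_prod pf_fac3) auto
    moreover have "(\<Sum>b\<in>{1..Suc n}-{p}. if b = Suc n then 2 else 0) = (if p = Suc n then 0 else (2::nat))"
      by (subst sum.delta) auto
    ultimately show ?thesis by simp
  qed
  have "polyfun (\<Sum>p\<in>{1..Suc n}. if p = Suc n then 0 else 2)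
     (\<lambda>z. \<Prod>p\<in>{1..Suc n}. \<Prod>b\<in>{1..Suc n}-{p}. (X (\<sigma> p) - (Zv(Suc n := z)) b) * (Y (\<sigma> p) - (Zv(Suc n := z)) b))"
    by (intro polyfun_prod inner) auto
  moreover have sm: "(\<Sum>p\<in>{1..Suc n}. if p = Suc n then 0 else 2) = 2 * n"
  proof -
    have "(\<Sum>p\<in>{1..Suc n}. if p = Suc n then 0 else 2) = (\<Sum>p\<in>{1..n}. if p = Suc n then 0 else (2::nat))"
      by (subst sum.nat_ivl_Suc') auto
    also have "\<dots> = (\<Sum>p\<in>{1..n}. 2)" by (intro sum.cong) auto
    finally show ?thesis by simp
  qed
  ultimately have "polyfun (2 * n)
     (\<lambda>z. \<Prod>p\<in>{1..Suc n}. \<Prod>b\<in>{1..Suc n}-{p}. (X (\<sigma> p) - (Zv(Suc n := z)) b) * (Y (\<sigma> p) - (Zv(Suc n := z)) b))"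
    by (simp only: sm)
  from polyfun_mult[OF polyfun_const[of 0] this]
  show "polyfun (2 * n) (\<lambda>z. of_int (sign \<sigma>) *
     (\<Prod>p\<in>{1..Suc n}. \<Prod>b\<in>{1..Suc n}-{p}. (X (\<sigma> p) - (Zv(Suc n := z)) b) * (Y (\<sigma> p) - (Zv(Suc n := z)) b)))"
    by simp
qed

lemma pf_all: "polyfun (2 * n) (\<lambda>z. Fc (Suc n) X Y (Zv(Suc n := z)) * Pp (Suc n) X Y * Vp (Suc n) (Zv(Suc n := z))
    - Nc (Suc n) X Y (Zv(Suc n := z)))"
proof (rule polyfun_diff[OF _ pf_Nc])
  have "polyfun (n + 0 + n) (\<lambda>z. Fc (Suc n) X Y (Zv(Suc n := z)) * Pp (Suc n) X Y * Vp (Suc n) (Zv(Suc n := z)))"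
    by (intro polyfun_mult pf_Fc pf_Vp polyfun_const)
  then show "polyfun (2 * n) (\<lambda>z. Fc (Suc n) X Y (Zv(Suc n := z)) * Pp (Suc n) X Y * Vp (Suc n) (Zv(Suc n := z)))"
    by (simp add: mult_2)
qed

lemma core:
  assumes "\<And>a b. a \<in> {1..m} \<Longrightarrow> b \<in> {1..m} \<Longrightarrow> a \<noteq> b \<Longrightarrow> X a \<noteq> Y b"
    and "inj_on Y {1..m}" and "inj_on Zv {1..m}"
    and "\<And>a k. a \<in> {1..m} \<Longrightarrow> k \<in> {1..m} \<Longrightarrow> Y a \<noteq> Zv k"
  shows "Fc m X Y Zv * Pp m X Y * Vp m Zv = Nc m X Y Zv"
  using assms
proof (induction m arbitrary: X Y Zv)
  case 0
  have "{\<sigma>. \<sigma> permutes ({}::nat set)} = {id}" by auto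
  moreover have "prs 0 = {}" by (auto simp: prs_def)
  ultimately show ?case by (simp add: Fc_def Pp_def Vp_def Nc_def)
next
  case (Suc n)
  define f where "f z = Fc (Suc n) X Y (Zv(Suc n := z)) * Pp (Suc n) X Y * Vp (Suc n) (Zv(Suc n := z))
    - Nc (Suc n) X Y (Zv(Suc n := z))" for z
  have rootY: "f (Y a) = 0" if a: "a \<in> {1..Suc n}" for a
  proof -
    define sw where "sw = Transposition.transpose a (Suc n)"
    have swp: "sw permutes {1..Suc n}" unfolding sw_def using a by (intro permutes_swap_id) auto
    have swin: "sw c \<in> {1..Suc n}" if "c \<in> {1..n}" for c
      using permutes_in_image[OF swp] that by auto
    have swne: "sw c \<noteq> a" if "c \<in> {1..n}" for c
      using that unfolding sw_def by (auto simp: transpose_def)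
    have swinj: "inj sw" by (rule permutes_inj[OF swp])
    define X' where "X' = X \<circ> sw"
    define Y' where "Y' = Y \<circ> sw"
    have IH: "Fc n X' Y' Zv * Pp n X' Y' * Vp n Zv = Nc n X' Y' Zv"
    proof (rule Suc.IH)
      show "X' a' \<noteq> Y' b'" if "a' \<in> {1..n}" "b' \<in> {1..n}" "a' \<noteq> b'" for a' b'
        unfolding X'_def Y'_def using Suc.prems(1)[OF swin[OF that(1)] swin[OF that(2)]] that(3) swinj
        by (auto simp: inj_eq)
      show "inj_on Y' {1..n}" unfolding Y'_def
      proof (rule comp_inj_on)
        show "inj_on sw {1..n}" using swinj by (auto intro: inj_on_subset)
        have "sw ` {1..n} \<subseteq> {1..Suc n}" using swin by blast
        then show "inj_on Y (sw ` {1..n})" by (rule inj_on_subset[OF Suc.prems(2)])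
      qed
      show "inj_on Zv {1..n}" by (rule inj_on_subset[OF Suc.prems(3)]) auto
      show "Y' a' \<noteq> Zv k" if "a' \<in> {1..n}" "k \<in> {1..n}" for a' k
        unfolding Y'_def using Suc.prems(4)[OF swin[OF that(1)]] that(2) by auto
    qed
    define A where "A = (\<Prod>k\<in>{1..n}. X a - Zv k)"
    define D where "D = (\<Prod>k\<in>{1..n}. Y a - Zv k)"
    define G where "G = (\<Prod>c\<in>{1..n}. (X' c - Y a) * (Y' c - Y a))"
    have XS: "X' (Suc n) = X a" and YS: "Y' (Suc n) = Y a" by (simp_all add: X'_def Y'_def sw_def)
    have F: "Fc (Suc n) X Y (Zv(Suc n := Y a)) = of_int (sign sw) *
        (A * (\<Prod>c\<in>{1..n}. (Y' c - Y a) / (X a - Y' c))) * Fc n X' Y' Zv"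
      unfolding A_def X'_def Y'_def sw_def using Fc_at[OF a] by simp
    have N: "Nc (Suc n) X Y (Zv(Suc n := Y a)) = of_int (sign sw) * ((A * D) * G) * Nc n X' Y' Zv"
      unfolding A_def D_def G_def X'_def Y'_def sw_def using Nc_at[OF a] by (simp add: prod.distrib)
    have P: "Pp (Suc n) X Y = Pp n X' Y' * (\<Prod>c\<in>{1..n}. (X a - Y' c) * (X' c - Y a))"
      using Pp_perm[OF swp, of X Y] Pp_Suc[of n X' Y'] unfolding X'_def Y'_def XS[unfolded X'_def] YS[unfolded Y'_def]
      by simp
    have V: "Vp (Suc n) (Zv(Suc n := Y a)) = Vp n Zv * D"
      unfolding Vp_Suc D_def by (simp add: Vp_cong[of n "Zv(Suc n := Y a)" Zv])
    have BC: "(\<Prod>c\<in>{1..n}. (Y' c - Y a) / (X a - Y' c)) * (\<Prod>c\<in>{1..n}. (X a - Y' c) * (X' c - Y a)) = G"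
      unfolding G_def prod.distrib[symmetric]
    proof (intro prod.cong refl)
      fix c assume c: "c \<in> {1..n}"
      have "X a - Y' c \<noteq> 0" using Suc.prems(1)[OF a swin[OF c]] swne[OF c] by (auto simp: Y'_def)
      then show "(Y' c - Y a) / (X a - Y' c) * ((X a - Y' c) * (X' c - Y a)) = (X' c - Y a) * (Y' c - Y a)"
        by (simp add: field_simps)
    qed
    have "f (Y a) = of_int (sign sw) * A * D *
        ((\<Prod>c\<in>{1..n}. (Y' c - Y a) / (X a - Y' c)) * (\<Prod>c\<in>{1..n}. (X a - Y' c) * (X' c - Y a))) *
        (Fc n X' Y' Zv * Pp n X' Y' * Vp n Zv) - of_int (sign sw) * A * D * G * Nc n X' Y' Zv"
      unfolding f_def F N P V by (simp add: mult_ac)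
    also have "\<dots> = 0" unfolding BC IH by simp
    finally show ?thesis .
  qed
  have rootZ: "f (Zv k) = 0" if k: "k \<in> {1..n}" for k
  proof -
    have "Vp (Suc n) (Zv(Suc n := Zv k)) = 0"
      unfolding Vp_Suc by (rule mult_eq_0_iff[THEN iffD2], rule disjI2, rule prod_zero) (use k in auto)
    moreover have "Nc (Suc n) X Y (Zv(Suc n := Zv k)) = 0"
      by (rule Nc_zero[of k _ "Suc n"]) (use k in auto)
    ultimately show ?thesis unfolding f_def by simp
  qed
  define R where "R = Y ` {1..Suc n} \<union> Zv ` {1..n}"
  have cardR: "card R = Suc n + n"
  proof -
    have "card (Y ` {1..Suc n}) = Suc n" using card_image[OF Suc.prems(2)] by simp
    moreover have "card (Zv ` {1..n}) = n" using card_image[OF inj_on_subset[OF Suc.prems(3)]] by simp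
    moreover have "Y ` {1..Suc n} \<inter> Zv ` {1..n} = {}" using Suc.prems(4) by fastforce
    ultimately show ?thesis unfolding R_def by (subst card_Un_disjoint) auto
  qed
  have "f (Zv (Suc n)) = 0"
  proof (rule polyfun_roots[where R = R and f = f and z = "Zv (Suc n)" and d = "2 * n"])
    show "polyfun (2 * n) f" by (rule polyfun_cong[OF pf_all]) (simp add: f_def)
    show "finite R" unfolding R_def by simp
    show "2 * n < card R" unfolding cardR by simp
    show "f r = 0" if "r \<in> R" for r using that rootY rootZ unfolding R_def by auto
  qed
  then show ?case unfolding f_def by simp
qed

lemma sh_exp: "sinh (u - v) = (exp (2 * u) - exp (2 * v)) * (exp (- u) * exp (- v) / 2)" for u v :: complex
proof -
  have "(exp (2 * u) - exp (2 * v)) * (exp (- u) * exp (- v)) = exp (u - v) - exp (- (u - v))"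
    by (simp add: algebra_simps exp_add[symmetric] exp_diff[symmetric])
  then show ?thesis by (simp add: sinh_field_def)
qed

lemma offdiag_pow:
  assumes "finite S"
  shows "(\<Prod>a\<in>S. \<Prod>b\<in>S-{a}. g b) = (\<Prod>b\<in>S. g b ^ (card S - 1))"
proof -
  have "(\<Prod>a\<in>S. \<Prod>b\<in>S-{a}. g b) = (\<Prod>a\<in>S. \<Prod>b\<in>{b. b \<in> S \<and> a \<noteq> b}. g b)"
    by (intro prod.cong) auto
  also have "\<dots> = (\<Prod>b\<in>S. \<Prod>a\<in>{a. a \<in> S \<and> a \<noteq> b}. g b)"
    by (rule prod.swap_restrict) (use assms in auto)
  also have "\<dots> = (\<Prod>b\<in>S. g b ^ (card S - 1))"
  proof (intro prod.cong refl)
    fix b assume "b \<in> S"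
    then have "{a. a \<in> S \<and> a \<noteq> b} = S - {b}" by auto
    then show "(\<Prod>a\<in>{a. a \<in> S \<and> a \<noteq> b}. g b) = g b ^ (card S - 1)"
      using \<open>b \<in> S\<close> assms by simp
  qed
  finally show ?thesis .
qed

lemma prs_pow: "(\<Prod>(k, j)\<in>prs m. w k * w j) = (\<Prod>b\<in>{1..m}. w b ^ (m - 1))"
proof (induction m)
  case 0
  have "prs 0 = {}" by (auto simp: prs_def)
  then show ?case by simp
next
  case (Suc n)
  have "(\<Prod>(k, j)\<in>prs (Suc n). w k * w j) = (\<Prod>b\<in>{1..n}. w b ^ (n - 1)) * (\<Prod>k\<in>{1..n}. w k * w (Suc n))"
    by (subst prod_prs_Suc) (simp add: Suc.IH)
  also have "\<dots> = (\<Prod>b\<in>{1..n}. w b ^ (n - 1) * w b) * w (Suc n) ^ n"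
    by (simp add: prod.distrib mult_ac)
  also have "(\<Prod>b\<in>{1..n}. w b ^ (n - 1) * w b) = (\<Prod>b\<in>{1..n}. w b ^ n)"
  proof (intro prod.cong refl)
    fix b assume "b \<in> {1..n}"
    then have "n = Suc (n - 1)" by auto
    then show "w b ^ (n - 1) * w b = w b ^ n" by (metis power_Suc2)
  qed
  also have "(\<Prod>b\<in>{1..n}. w b ^ n) * w (Suc n) ^ n = (\<Prod>b\<in>{1..Suc n}. w b ^ (Suc n - 1))"
    by (subst prod.nat_ivl_Suc') (simp_all add: mult_ac)
  finally show ?case .
qed

definition Fs :: "nat \<Rightarrow> (nat \<Rightarrow> complex) \<Rightarrow> (nat \<Rightarrow> complex) \<Rightarrow> (nat \<Rightarrow> complex) \<Rightarrow> complex" where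
  "Fs m U W xi = (\<Sum>\<sigma> | \<sigma> permutes {1..m}. of_int (sign \<sigma>) *
     (\<Prod>(k, j)\<in>prs m. sinh (U (\<sigma> j) - xi k) * sinh (W (\<sigma> k) - xi j) / sinh (U (\<sigma> j) - W (\<sigma> k))))"

definition Ps :: "nat \<Rightarrow> (nat \<Rightarrow> complex) \<Rightarrow> (nat \<Rightarrow> complex) \<Rightarrow> complex" where
  "Ps m U W = (\<Prod>a\<in>{1..m}. \<Prod>b\<in>{1..m}-{a}. sinh (U a - W b))"

definition Vs :: "nat \<Rightarrow> (nat \<Rightarrow> complex) \<Rightarrow> complex" where
  "Vs m xi = (\<Prod>(k, j)\<in>prs m. sinh (xi j - xi k))"

definition Ns :: "nat \<Rightarrow> (nat \<Rightarrow> complex) \<Rightarrow> (nat \<Rightarrow> complex) \<Rightarrow> (nat \<Rightarrow> complex) \<Rightarrow> complex" where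
  "Ns m U W xi = (\<Sum>\<sigma> | \<sigma> permutes {1..m}. of_int (sign \<sigma>) *
     (\<Prod>p\<in>{1..m}. \<Prod>b\<in>{1..m}-{p}. sinh (U (\<sigma> p) - xi b) * sinh (W (\<sigma> p) - xi b)))"

lemma sh_ne: "sinh (u - v) \<noteq> 0 \<Longrightarrow> exp (2 * u) \<noteq> exp (2 * v)" for u v :: complex
  by (auto simp: sh_exp)

lemma score:
  assumes H1: "\<And>a b. a \<in> {1..m} \<Longrightarrow> b \<in> {1..m} \<Longrightarrow> a \<noteq> b \<Longrightarrow> sinh (U a - W b) \<noteq> 0"
    and H2: "\<And>a b. a \<in> {1..m} \<Longrightarrow> b \<in> {1..m} \<Longrightarrow> a \<noteq> b \<Longrightarrow> sinh (W a - W b) \<noteq> 0"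
    and H3: "\<And>a b. a \<in> {1..m} \<Longrightarrow> b \<in> {1..m} \<Longrightarrow> a \<noteq> b \<Longrightarrow> sinh (xi a - xi b) \<noteq> 0"
    and H4: "\<And>a k. a \<in> {1..m} \<Longrightarrow> k \<in> {1..m} \<Longrightarrow> sinh (W a - xi k) \<noteq> 0"
  shows "Fs m U W xi * Ps m U W * Vs m xi = Ns m U W xi"
proof -
  define X where "X a = exp (2 * U a)" for a
  define Y where "Y a = exp (2 * W a)" for a
  define Zv where "Zv a = exp (2 * xi a)" for a
  define \<phi> where "\<phi> t = exp (- t)" for t :: complex
  have \<phi>nz: "\<phi> t \<noteq> 0" for t unfolding \<phi>_def by simp
  have sh: "sinh (u - v) = (exp (2 * u) - exp (2 * v)) * (\<phi> u * \<phi> v / 2)" for u v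
    unfolding \<phi>_def by (rule sh_exp)
  have cr: "Fc m X Y Zv * Pp m X Y * Vp m Zv = Nc m X Y Zv"
  proof (rule core)
    show "X a \<noteq> Y b" if "a \<in> {1..m}" "b \<in> {1..m}" "a \<noteq> b" for a b
      unfolding X_def Y_def by (rule sh_ne[OF H1[OF that]])
    show "inj_on Y {1..m}"
      unfolding inj_on_def Y_def using sh_ne[OF H2] by blast
    show "inj_on Zv {1..m}"
      unfolding inj_on_def Zv_def using sh_ne[OF H3] by blast
    show "Y a \<noteq> Zv k" if "a \<in> {1..m}" "k \<in> {1..m}" for a k
      unfolding Y_def Zv_def by (rule sh_ne[OF H4[OF that]])
  qed
  define CF where "CF = (\<Prod>(k, j)\<in>prs m. \<phi> (xi k) * \<phi> (xi j) / 2)"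
  define CV where "CV = (\<Prod>(k, j)\<in>prs m. \<phi> (xi j) * \<phi> (xi k) / 2)"
  define CP where "CP = (\<Prod>a\<in>{1..m}. \<Prod>b\<in>{1..m}-{a}. \<phi> (U a) * \<phi> (W b) / 2)"
  define K1 where "K1 = (\<Prod>c\<in>{1..m}. (\<phi> (U c) * \<phi> (W c) / 2) ^ (m - 1))"
  define K2 where "K2 = (\<Prod>p\<in>{1..m}. \<Prod>b\<in>{1..m}-{p}. \<phi> (xi b) ^ 2 / 2)"
  have aux: "(A * (p * q / 2)) * (B * (r * t / 2)) / (C * (p * r / 2)) = A * B / C * (q * t / 2)"
    if "p \<noteq> 0" "r \<noteq> 0" for A B C p q r t :: complex
    using that by (cases "C = 0") (simp_all add: field_simps)
  have eF: "Fs m U W xi = Fc m X Y Zv * CF"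
    unfolding Fs_def Fc_def CF_def sum_distrib_right
  proof (intro sum.cong refl)
    fix \<sigma> assume "\<sigma> \<in> {\<sigma>. \<sigma> permutes {1..m}}"
    have "(\<Prod>(k, j)\<in>prs m. sinh (U (\<sigma> j) - xi k) * sinh (W (\<sigma> k) - xi j) / sinh (U (\<sigma> j) - W (\<sigma> k)))
      = (\<Prod>(k, j)\<in>prs m. (X (\<sigma> j) - Zv k) * (Y (\<sigma> k) - Zv j) / (X (\<sigma> j) - Y (\<sigma> k)) * (\<phi> (xi k) * \<phi> (xi j) / 2))"
      by (intro prod.cong refl) (simp only: split_beta sh X_def Y_def Zv_def aux[OF \<phi>nz \<phi>nz])
    then show "of_int (sign \<sigma>) * (\<Prod>(k, j)\<in>prs m. sinh (U (\<sigma> j) - xi k) * sinh (W (\<sigma> k) - xi j) / sinh (U (\<sigma> j) - W (\<sigma> k)))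
      = of_int (sign \<sigma>) * (\<Prod>(k, j)\<in>prs m. (X (\<sigma> j) - Zv k) * (Y (\<sigma> k) - Zv j) / (X (\<sigma> j) - Y (\<sigma> k))) *
        (\<Prod>(k, j)\<in>prs m. \<phi> (xi k) * \<phi> (xi j) / 2)"
      by (simp add: prod.distrib[symmetric] case_prod_beta mult_ac)
  qed
  have eP: "Ps m U W = Pp m X Y * CP"
    unfolding Ps_def Pp_def CP_def prod.distrib[symmetric] by (simp add: sh X_def Y_def)
  have eV: "Vs m xi = Vp m Zv * CV"
    unfolding Vs_def Vp_def CV_def prod.distrib[symmetric] by (simp add: sh Zv_def case_prod_beta)
  have eN: "Ns m U W xi = Nc m X Y Zv * (K1 * K2)"
    unfolding Ns_def Nc_def sum_distrib_right
  proof (intro sum.cong refl)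
    fix \<sigma> assume "\<sigma> \<in> {\<sigma>. \<sigma> permutes {1..m}}"
    then have sp: "\<sigma> permutes {1..m}" by simp
    have "(\<Prod>p\<in>{1..m}. \<Prod>b\<in>{1..m}-{p}. sinh (U (\<sigma> p) - xi b) * sinh (W (\<sigma> p) - xi b))
      = (\<Prod>p\<in>{1..m}. \<Prod>b\<in>{1..m}-{p}. ((X (\<sigma> p) - Zv b) * (Y (\<sigma> p) - Zv b)) *
          ((\<phi> (U (\<sigma> p)) * \<phi> (W (\<sigma> p)) / 2) * (\<phi> (xi b) ^ 2 / 2)))"
      by (intro prod.cong refl) (simp add: sh X_def Y_def Zv_def power2_eq_square mult_ac)
    also have "\<dots> = (\<Prod>p\<in>{1..m}. \<Prod>b\<in>{1..m}-{p}. (X (\<sigma> p) - Zv b) * (Y (\<sigma> p) - Zv b)) *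
        ((\<Prod>p\<in>{1..m}. \<Prod>b\<in>{1..m}-{p}. \<phi> (U (\<sigma> p)) * \<phi> (W (\<sigma> p)) / 2) * K2)"
      unfolding K2_def prod.distrib ..
    also have "(\<Prod>p\<in>{1..m}. \<Prod>b\<in>{1..m}-{p}. \<phi> (U (\<sigma> p)) * \<phi> (W (\<sigma> p)) / 2)
        = (\<Prod>p\<in>{1..m}. (\<phi> (U (\<sigma> p)) * \<phi> (W (\<sigma> p)) / 2) ^ (m - 1))"
      by (intro prod.cong refl) simp
    also have "\<dots> = K1"
      unfolding K1_def using prod.permute[OF sp, of "\<lambda>c. (\<phi> (U c) * \<phi> (W c) / 2) ^ (m - 1)"]
      by (simp add: o_def)
    finally show "of_int (sign \<sigma>) * (\<Prod>p\<in>{1..m}. \<Prod>b\<in>{1..m}-{p}. sinh (U (\<sigma> p) - xi b) * sinh (W (\<sigma> p) - xi b))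
      = of_int (sign \<sigma>) * (\<Prod>p\<in>{1..m}. \<Prod>b\<in>{1..m}-{p}. (X (\<sigma> p) - Zv b) * (Y (\<sigma> p) - Zv b)) * (K1 * K2)"
      by simp
  qed
  have cP: "CP = K1"
  proof -
    have "CP = (\<Prod>a\<in>{1..m}. \<Prod>b\<in>{1..m}-{a}. \<phi> (U a) / 2) * (\<Prod>a\<in>{1..m}. \<Prod>b\<in>{1..m}-{a}. \<phi> (W b))"
      unfolding CP_def prod.distrib[symmetric] by simp
    also have "\<dots> = (\<Prod>a\<in>{1..m}. (\<phi> (U a) / 2) ^ (m - 1)) * (\<Prod>b\<in>{1..m}. \<phi> (W b) ^ (m - 1))"
      by (subst offdiag_pow) simp_all
    also have "\<dots> = K1" unfolding K1_def prod.distrib[symmetric] power_mult_distrib[symmetric]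
      by (simp add: mult_ac)
    finally show ?thesis .
  qed
  have cFV: "CF * CV = K2"
  proof -
    have "CF * CV = (\<Prod>(k, j)\<in>prs m. (\<phi> (xi k) ^ 2 / 2) * (\<phi> (xi j) ^ 2 / 2))"
      unfolding CF_def CV_def prod.distrib[symmetric] by (intro prod.cong refl) (auto simp: power2_eq_square)
    also have "\<dots> = (\<Prod>b\<in>{1..m}. (\<phi> (xi b) ^ 2 / 2) ^ (m - 1))" by (rule prs_pow)
    also have "\<dots> = K2" unfolding K2_def by (subst offdiag_pow) simp_all
    finally show ?thesis .
  qed
  have "Fs m U W xi * Ps m U W * Vs m xi = (Fc m X Y Zv * Pp m X Y * Vp m Zv) * (CP * (CF * CV))"
    unfolding eF eP eV by (simp add: mult_ac)
  also have "\<dots> = Ns m U W xi" unfolding cr cP cFV eN ..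
  finally show ?thesis .
qed


lemma offdiag_Suc:
  "(\<Prod>a\<in>{1..Suc n}. \<Prod>b\<in>{1..Suc n}-{a}. h a b) =
   (\<Prod>a\<in>{1..n}. \<Prod>b\<in>{1..n}-{a}. h a b) * (\<Prod>c\<in>{1..n}. h (Suc n) c * h c (Suc n))"
proof -
  have 1: "(\<Prod>b\<in>{1..Suc n}-{Suc n}. h (Suc n) b) = (\<Prod>b\<in>{1..n}. h (Suc n) b)"
    by (intro prod.cong) auto
  have 2: "(\<Prod>b\<in>{1..Suc n}-{a}. h a b) = h a (Suc n) * (\<Prod>b\<in>{1..n}-{a}. h a b)"
    if "a \<in> {1..n}" for a
  proof -
    have "{1..Suc n}-{a} = insert (Suc n) ({1..n}-{a})" using that by auto
    then show ?thesis by simp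
  qed
  have "(\<Prod>a\<in>{1..Suc n}. \<Prod>b\<in>{1..Suc n}-{a}. h a b) = (\<Prod>b\<in>{1..n}. h (Suc n) b) *
      (\<Prod>a\<in>{1..n}. h a (Suc n) * (\<Prod>b\<in>{1..n}-{a}. h a b))"
  proof -
    have "(\<Prod>a\<in>{1..Suc n}. \<Prod>b\<in>{1..Suc n}-{a}. h a b) = (\<Prod>b\<in>{1..Suc n}-{Suc n}. h (Suc n) b) *
      (\<Prod>a\<in>{1..n}. \<Prod>b\<in>{1..Suc n}-{a}. h a b)"
      by (rule prod.nat_ivl_Suc') simp
    also have "\<dots> = (\<Prod>b\<in>{1..n}. h (Suc n) b) *
      (\<Prod>a\<in>{1..n}. h a (Suc n) * (\<Prod>b\<in>{1..n}-{a}. h a b))"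
      by (simp only: 1 2 cong: prod.cong)
    finally show ?thesis .
  qed
  also have "\<dots> = (\<Prod>a\<in>{1..n}. \<Prod>b\<in>{1..n}-{a}. h a b) * (\<Prod>c\<in>{1..n}. h (Suc n) c * h c (Suc n))"
    unfolding prod.distrib by (simp add: mult_ac)
  finally show ?thesis .
qed

lemma offdiag_pairs:
  "(\<Prod>a\<in>{1..m}. \<Prod>b\<in>{1..m}-{a}. h a b) = (\<Prod>(k, j)\<in>prs m. h j k * h k j)"
proof (induction m)
  case 0
  have "prs 0 = {}" by (auto simp: prs_def)
  then show ?case by simp
next
  case (Suc n)
  show ?case unfolding offdiag_Suc Suc.IH by (subst prod_prs_Suc) simp
qed

lemma mp_apply:
  assumes "inj_on f A" "x \<in> A"
  shows "map_permutation A f p (f x) = f (p x)"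
  using assms unfolding map_permutation_def by simp

lemma det_Mmat:
  "det (Mmat \<zeta> m lam xi) = (\<Sum>q | q permutes {1..m}. of_int (sign q) *
     (\<Prod>a\<in>{1..m}. of_real (sin \<zeta>) / (sinh (lam a - xi (q a) + \<i> * of_real \<zeta> / 2) *
                          sinh (lam a - xi (q a) - \<i> * of_real \<zeta> / 2))))"
proof -
  define E where "E a b = of_real (sin \<zeta>) / (sinh (lam a - xi b + \<i> * of_real \<zeta> / 2) *
                          sinh (lam a - xi b - \<i> * of_real \<zeta> / 2))" for a b
  have car: "Mmat \<zeta> m lam xi \<in> carrier_mat m m" unfolding Mmat_def by simp
  have "det (Mmat \<zeta> m lam xi) = (\<Sum>p | p permutes {0..<m}. of_int (sign p) * (\<Prod>i=0..<m. Mmat \<zeta> m lam xi $$ (i, p i)))"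
    by (rule det_def'[OF car])
  also have "\<dots> = (\<Sum>p | p permutes {0..<m}. of_int (sign p) * (\<Prod>i=0..<m. E (Suc i) (Suc (p i))))"
  proof (intro sum.cong refl arg_cong2[where f="(*)"] prod.cong)
    fix p i assume p: "p \<in> {p. p permutes {0..<m}}" and i: "i \<in> {0..<m}"
    then have "p i < m" using permutes_in_image[of p "{0..<m}" i] by simp
    then show "Mmat \<zeta> m lam xi $$ (i, p i) = E (Suc i) (Suc (p i))"
      using i unfolding Mmat_def E_def by simp
  qed
  also have "\<dots> = (\<Sum>q | q permutes {1..m}. of_int (sign q) * (\<Prod>a\<in>{1..m}. E a (q a)))"
  proof (rule sum.reindex_bij_witness[of _ "map_permutation {1..m} (\<lambda>x. x - 1)" "map_permutation {0..<m} Suc"])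
    have injS: "inj_on Suc {0..<m}" by simp
    have injP: "inj_on (\<lambda>x. x - 1) {1..m}" by (auto simp: inj_on_def)
    have bS: "bij_betw Suc {0..<m} {1..m}"
      by (rule bij_betwI[where g="\<lambda>x. x - 1"]) auto
    have bP: "bij_betw (\<lambda>x. x - 1) {1..m} {0..<m}"
      by (rule bij_betwI[where g="Suc"]) auto
    fix p assume "p \<in> {p. p permutes {0..<m}}"
    then have p: "p permutes {0..<m}" by simp
    show "map_permutation {1..m} (\<lambda>x. x - 1) (map_permutation {0..<m} Suc p) = p"
    proof -
      have "map_permutation {1..m} (\<lambda>x. x - 1) (map_permutation {0..<m} Suc p) =
            map_permutation {0..<m} ((\<lambda>x. x - 1) \<circ> Suc) p"
        by (rule map_permutation_compose[OF bS injP])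
      also have "\<dots> = map_permutation {0..<m} id p"
        by (rule map_permutation_cong[OF _ p]) (auto simp: inj_on_def)
      also have "\<dots> = p" using p by simp
      finally show ?thesis .
    qed
    show "map_permutation {0..<m} Suc p \<in> {q. q permutes {1..m}}"
      using map_permutation_permutes[OF bS p] by simp
    have sg: "sign (map_permutation {0..<m} Suc p) = sign p"
      by (rule sign_map_permutation[OF injS p]) simp
    have "(\<Prod>a\<in>{1..m}. E a (map_permutation {0..<m} Suc p a)) =
          (\<Prod>i\<in>{0..<m}. E (Suc i) (map_permutation {0..<m} Suc p (Suc i)))"
    proof -
      have "{1..m} = Suc ` {0..<m}" using bS by (simp add: bij_betw_def)
      then show ?thesis by (simp only: prod.reindex[OF injS] o_def)
    qed
    also have "\<dots> = (\<Prod>i\<in>{0..<m}. E (Suc i) (Suc (p i)))"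
      by (intro prod.cong refl) (simp add: mp_apply[OF injS])
    finally show "of_int (sign (map_permutation {0..<m} Suc p)) *
        (\<Prod>a\<in>{1..m}. E a (map_permutation {0..<m} Suc p a)) =
        of_int (sign p) * (\<Prod>i = 0..<m. E (Suc i) (Suc (p i)))" by (simp add: sg)
  next
    have bS: "bij_betw Suc {0..<m} {1..m}"
      by (rule bij_betwI[where g="\<lambda>x. x - 1"]) auto
    have bP: "bij_betw (\<lambda>x. x - 1) {1..m} {0..<m}"
      by (rule bij_betwI[where g="Suc"]) auto
    fix q assume "q \<in> {q. q permutes {1..m}}"
    then have q: "q permutes {1..m}" by simp
    show "map_permutation {0..<m} Suc (map_permutation {1..m} (\<lambda>x. x - 1) q) = q"
    proof -
      have "map_permutation {0..<m} Suc (map_permutation {1..m} (\<lambda>x. x - 1) q) =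
            map_permutation {1..m} (Suc \<circ> (\<lambda>x. x - 1)) q"
        by (rule map_permutation_compose[OF bP]) simp
      also have "\<dots> = map_permutation {1..m} id q"
        by (rule map_permutation_cong[OF _ q]) (auto simp: inj_on_def)
      also have "\<dots> = q" using q by simp
      finally show ?thesis .
    qed
    show "map_permutation {1..m} (\<lambda>x. x - 1) q \<in> {p. p permutes {0..<m}}"
      using map_permutation_permutes[OF bP q] by simp
  qed
  finally show ?thesis unfolding E_def .
qed

theorem mainTheorem4:
  fixes \<zeta> :: real and m s :: nat and lam xi :: "nat \<Rightarrow> complex"
  assumes "0 < \<zeta>" and "\<zeta> < pi"
    and "1 \<le> m" and "s \<le> m"
    and generic_ll: "\<And>a b. a \<in> {1..m} \<Longrightarrow> b \<in> {1..m} \<Longrightarrow> a \<noteq> b \<Longrightarrow>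
            sinh (lam a - lam b) \<noteq> 0 \<and> sinh (lam a - lam b + \<i> * of_real \<zeta>) \<noteq> 0
            \<and> sinh (lam a - lam b - \<i> * of_real \<zeta>) \<noteq> 0"
    and generic_xx: "\<And>a b. a \<in> {1..m} \<Longrightarrow> b \<in> {1..m} \<Longrightarrow> a \<noteq> b \<Longrightarrow> sinh (xi a - xi b) \<noteq> 0"
    and generic_lx: "\<And>a b. a \<in> {1..m} \<Longrightarrow> b \<in> {1..m} \<Longrightarrow>
            sinh (lam a - xi b + \<i> * of_real \<zeta> / 2) \<noteq> 0 \<and> sinh (lam a - xi b - \<i> * of_real \<zeta> / 2) \<noteq> 0"
  shows "Gtilde \<zeta> s m lam xi = Z \<zeta> m lam xi / (of_real (sin \<zeta>)) ^ m
       \<and> G \<zeta> s m lam xi = Theta \<zeta> s m lam * Z \<zeta> m lam xi /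
            (of_nat (fact s * fact (m - s)) * (of_real (sin \<zeta>)) ^ m)"
proof -
  define U where "U a = lam a + \<i> * eps s a * of_real \<zeta>" for a
  define W where "W a = lam a - \<i> * eps s a * of_real \<zeta>" for a
  have eU: "lam a - x + \<i> * eps s a * of_real \<zeta> = U a - x" for a x unfolding U_def by (simp add: algebra_simps)
  have eW: "lam a - x - \<i> * eps s a * of_real \<zeta> = W a - x" for a x unfolding W_def by (simp add: algebra_simps)
  have eUW: "lam a - lam b + \<i> * (eps s a + eps s b) * of_real \<zeta> = U a - W b" for a b
    unfolding U_def W_def by (simp add: algebra_simps)
  have eWU: "lam a - lam b - \<i> * (eps s a + eps s b) * of_real \<zeta> = W a - U b" for a b
    unfolding U_def W_def by (simp add: algebra_simps)
  have H1: "sinh (U a - W b) \<noteq> 0" if "a \<in> {1..m}" "b \<in> {1..m}" "a \<noteq> b" for a b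
    using generic_ll[OF that] unfolding U_def W_def eps_def
    by (cases "a \<le> s"; cases "b \<le> s") (simp_all add: algebra_simps)
  have H2: "sinh (W a - W b) \<noteq> 0" if "a \<in> {1..m}" "b \<in> {1..m}" "a \<noteq> b" for a b
    using generic_ll[OF that] unfolding W_def eps_def
    by (cases "a \<le> s"; cases "b \<le> s") (simp_all add: algebra_simps)
  have H4: "sinh (W a - xi k) \<noteq> 0" if "a \<in> {1..m}" "k \<in> {1..m}" for a k
    using generic_lx[OF that] unfolding W_def eps_def
    by (cases "a \<le> s") (simp_all add: algebra_simps)
  have eD: "sinh (lam a - xi b + \<i> * of_real \<zeta> / 2) * sinh (lam a - xi b - \<i> * of_real \<zeta> / 2)
      = sinh (U a - xi b) * sinh (W a - xi b)" for a b
    unfolding U_def W_def eps_def by (cases "a \<le> s") (simp_all add: algebra_simps)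
  have score': "Fs m U W xi * Ps m U W * Vs m xi = Ns m U W xi"
    by (rule score[OF H1 H2 generic_xx H4])
  define fct where "fct = (of_nat (fact s * fact (m - s)) :: complex)"
  have fct0: "fct \<noteq> 0" unfolding fct_def by simp
  have GF: "fct * G \<zeta> s m lam xi = Fs m U W xi"
  proof -
    have "G \<zeta> s m lam xi = 1 / fct * Fs m U W xi"
      unfolding G_def Fs_def fct_def prs_def eU eW eUW ..
    then show ?thesis using fct0 by simp
  qed
  have PF: "Pfac \<zeta> s m lam = (\<Prod>(k, j)\<in>prs m. sinh (lam j - lam k) / (sinh (U j - W k) * sinh (W j - U k)))"
    unfolding Pfac_def prs_def eUW eWU ..
  define Q where "Q = (\<Prod>(k, j)\<in>prs m. sinh (lam j - lam k) * sinh (xi k - xi j))"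
  have Q0: "Q \<noteq> 0"
  proof -
    have nz: "sinh (lam j - lam k) * sinh (xi k - xi j) \<noteq> 0" if "(k, j) \<in> prs m" for k j
    proof -
      from that have k: "k \<in> {1..m}" and j: "j \<in> {1..m}" and kj': "j \<noteq> k" by (auto simp: prs_def)
      show "sinh (lam j - lam k) * sinh (xi k - xi j) \<noteq> 0"
        using generic_ll[OF j k kj'] generic_xx[OF k j] kj' by auto
    qed
    show ?thesis unfolding Q_def by (subst prod_zero_iff) (auto dest: nz)
  qed
  have PVP: "Ps m U W * Vs m xi * Pfac \<zeta> s m lam = Q"
  proof -
    have Ps_eq: "Ps m U W = (\<Prod>(k, j)\<in>prs m. sinh (U j - W k) * sinh (U k - W j))"
      unfolding Ps_def by (rule offdiag_pairs)
    have "Ps m U W * Vs m xi * Pfac \<zeta> s m lam = (\<Prod>(k, j)\<in>prs m.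
        sinh (U j - W k) * sinh (U k - W j) * sinh (xi j - xi k) * (sinh (lam j - lam k) / (sinh (U j - W k) * sinh (W j - U k))))"
      unfolding Ps_eq Vs_def PF prod.distrib[symmetric] by (intro prod.cong refl) (simp only: split_beta)
    also have "\<dots> = Q" unfolding Q_def
    proof (intro prod.cong refl, clarify)
      fix k j assume kj: "(k, j) \<in> prs m"
      then have k: "k \<in> {1..m}" and j: "j \<in> {1..m}" and kj': "j \<noteq> k" by (auto simp: prs_def)
      have n1: "sinh (U j - W k) \<noteq> 0" by (rule H1[OF j k kj'])
      have m1: "sinh (U k - W j) = - sinh (W j - U k)"
        using sinh_minus[of "W j - U k"] by (simp add: algebra_simps)
      have n2: "sinh (W j - U k) \<noteq> 0" using H1[OF k j] kj' m1 by auto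
      have m2: "sinh (xi j - xi k) = - sinh (xi k - xi j)"
        using sinh_minus[of "xi k - xi j"] by (simp add: algebra_simps)
      show "sinh (U j - W k) * sinh (U k - W j) * sinh (xi j - xi k) * (sinh (lam j - lam k) / (sinh (U j - W k) * sinh (W j - U k)))
          = sinh (lam j - lam k) * sinh (xi k - xi j)"
        unfolding m1 m2 using n1 n2 by (simp add: field_simps)
    qed
    finally show ?thesis .
  qed
  have Pfac0: "Pfac \<zeta> s m lam \<noteq> 0" using PVP Q0 by auto
  have sin0: "of_real (sin \<zeta>) \<noteq> (0::complex)" using sin_gt_zero[OF assms(1,2)] by simp
  have ZN: "Z \<zeta> m lam xi = of_real (sin \<zeta>) ^ m * Ns m U W xi / Q"
  proof -
    define D where "D a b = sinh (U a - xi b) * sinh (W a - xi b)" for a b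
    have D0: "D a b \<noteq> 0" if "a \<in> {1..m}" "b \<in> {1..m}" for a b
      using generic_lx[OF that] eD[of a b] unfolding D_def by auto
    have "(\<Prod>j\<in>{1..m}. \<Prod>k\<in>{1..m}. D j k) * det (Mmat \<zeta> m lam xi)
        = (\<Sum>q | q permutes {1..m}. of_int (sign q) *
            ((\<Prod>j\<in>{1..m}. \<Prod>k\<in>{1..m}. D j k) * (\<Prod>a\<in>{1..m}. of_real (sin \<zeta>) / D a (q a))))"
      unfolding det_Mmat eD D_def[symmetric] sum_distrib_left by (simp add: mult_ac)
    also have "\<dots> = (\<Sum>q | q permutes {1..m}. of_int (sign q) *
            (of_real (sin \<zeta>) ^ m * (\<Prod>a\<in>{1..m}. \<Prod>b\<in>{1..m}-{q a}. D a b)))"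
    proof (intro sum.cong refl)
      fix q assume "q \<in> {q. q permutes {1..m}}"
      then have q: "q permutes {1..m}" by simp
      have "(\<Prod>j\<in>{1..m}. \<Prod>k\<in>{1..m}. D j k) * (\<Prod>a\<in>{1..m}. of_real (sin \<zeta>) / D a (q a))
          = (\<Prod>a\<in>{1..m}. (\<Prod>k\<in>{1..m}. D a k) * (of_real (sin \<zeta>) / D a (q a)))"
        by (simp only: prod.distrib)
      also have "\<dots> = (\<Prod>a\<in>{1..m}. of_real (sin \<zeta>) * (\<Prod>b\<in>{1..m}-{q a}. D a b))"
      proof (intro prod.cong refl)
        fix a assume a: "a \<in> {1..m}"
        have qa: "q a \<in> {1..m}" using permutes_in_image[OF q] a by simp
        have "(\<Prod>k\<in>{1..m}. D a k) = D a (q a) * (\<Prod>b\<in>{1..m}-{q a}. D a b)"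
          by (rule prod.remove) (use qa in auto)
        then show "(\<Prod>k\<in>{1..m}. D a k) * (of_real (sin \<zeta>) / D a (q a)) = of_real (sin \<zeta>) * (\<Prod>b\<in>{1..m}-{q a}. D a b)"
          using D0[OF a qa] by (simp add: field_simps)
      qed
      also have "\<dots> = of_real (sin \<zeta>) ^ m * (\<Prod>a\<in>{1..m}. \<Prod>b\<in>{1..m}-{q a}. D a b)"
        by (simp add: prod.distrib)
      finally have eq: "(\<Prod>j\<in>{1..m}. \<Prod>k\<in>{1..m}. D j k) * (\<Prod>a\<in>{1..m}. of_real (sin \<zeta>) / D a (q a))
          = of_real (sin \<zeta>) ^ m * (\<Prod>a\<in>{1..m}. \<Prod>b\<in>{1..m}-{q a}. D a b)" .
      show "of_int (sign q) * ((\<Prod>j\<in>{1..m}. \<Prod>k\<in>{1..m}. D j k) * (\<Prod>a\<in>{1..m}. of_real (sin \<zeta>) / D a (q a)))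
          = of_int (sign q) * (of_real (sin \<zeta>) ^ m * (\<Prod>a\<in>{1..m}. \<Prod>b\<in>{1..m}-{q a}. D a b))"
        unfolding eq ..
    qed
    also have "\<dots> = of_real (sin \<zeta>) ^ m * Ns m U W xi"
    proof -
      have "Ns m U W xi = (\<Sum>\<sigma> | \<sigma> permutes {1..m}. of_int (sign \<sigma>) *
         (\<Prod>p\<in>{1..m}. \<Prod>b\<in>{1..m}-{p}. D (\<sigma> p) b))"
        unfolding Ns_def D_def ..
      also have "\<dots> = (\<Sum>q | q permutes {1..m}. of_int (sign (inv_into UNIV q)) *
         (\<Prod>p\<in>{1..m}. \<Prod>b\<in>{1..m}-{p}. D (inv_into UNIV q p) b))"
        by (rule sum_permutations_inverse)
      also have "\<dots> = (\<Sum>q | q permutes {1..m}. of_int (sign q) * (\<Prod>a\<in>{1..m}. \<Prod>b\<in>{1..m}-{q a}. D a b))"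
      proof (intro sum.cong refl)
        fix q assume "q \<in> {q. q permutes {1..m}}"
        then have q: "q permutes {1..m}" by simp
        have "sign (inv_into UNIV q) = sign q" by (rule sign_inverse[OF permutes_imp_permutation[OF _ q]]) simp
        moreover have "(\<Prod>p\<in>{1..m}. \<Prod>b\<in>{1..m}-{p}. D (inv_into UNIV q p) b) = (\<Prod>a\<in>{1..m}. \<Prod>b\<in>{1..m}-{q a}. D a b)"
          using prod.permute[OF q, of "\<lambda>p. \<Prod>b\<in>{1..m}-{p}. D (inv_into UNIV q p) b"]
          by (simp add: o_def permutes_inverses(2)[OF q])
        ultimately show "of_int (sign (inv_into UNIV q)) * (\<Prod>p\<in>{1..m}. \<Prod>b\<in>{1..m}-{p}. D (inv_into UNIV q p) b)
           = of_int (sign q) * (\<Prod>a\<in>{1..m}. \<Prod>b\<in>{1..m}-{q a}. D a b)" by simp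
      qed
      finally show ?thesis by (simp add: sum_distrib_left mult_ac)
    qed
    finally have key: "(\<Prod>j\<in>{1..m}. \<Prod>k\<in>{1..m}. D j k) * det (Mmat \<zeta> m lam xi) = of_real (sin \<zeta>) ^ m * Ns m U W xi" .
    have "Z \<zeta> m lam xi = (\<Prod>j\<in>{1..m}. \<Prod>k\<in>{1..m}. D j k) / Q * det (Mmat \<zeta> m lam xi)"
      unfolding Z_def Q_def prs_def eD D_def ..
    then show ?thesis using key by simp
  qed
  have FsQ: "Fs m U W xi * Q = Ns m U W xi * Pfac \<zeta> s m lam"
    using score' PVP by (metis mult.assoc)
  have GT: "Gtilde \<zeta> s m lam xi = Z \<zeta> m lam xi / (of_real (sin \<zeta>)) ^ m"
  proof -
    have "Gtilde \<zeta> s m lam xi = Fs m U W xi / Pfac \<zeta> s m lam"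
      unfolding Gtilde_def fct_def[symmetric] GF ..
    also have "\<dots> = Ns m U W xi / Q" using FsQ Pfac0 Q0 by (simp add: field_simps)
    also have "\<dots> = Z \<zeta> m lam xi / (of_real (sin \<zeta>)) ^ m" unfolding ZN using sin0 by simp
    finally show ?thesis .
  qed
  have PT: "Pfac \<zeta> s m lam = Theta \<zeta> s m lam"
  proof -
    define f where "f = (\<lambda>(k, j). sinh (lam j - lam k) / (sinh (lam j - lam k + \<i> * (eps s j + eps s k) * of_real \<zeta>) *
       sinh (lam j - lam k - \<i> * (eps s j + eps s k) * of_real \<zeta>)))"
    define g where "g = (\<lambda>(k, j). sinh (lam j - lam k) / (sinh (lam j - lam k + \<i> * of_real \<zeta>) * sinh (lam j - lam k - \<i> * of_real \<zeta>)))"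
    define A1 where "A1 = {(k, j). 1 \<le> k \<and> k < j \<and> j \<le> s}"
    define A2 where "A2 = {(k, j). s < k \<and> k < j \<and> j \<le> m}"
    define A3 where "A3 = {1..s} \<times> {s+1..m}"
    have fin1: "finite A1" by (rule finite_subset[OF _ finite_prs[of m]]) (use assms(4) in \<open>auto simp: A1_def prs_def\<close>)
    have fin2: "finite A2" by (rule finite_subset[OF _ finite_prs[of m]]) (auto simp: A2_def prs_def)
    have fin3: "finite A3" by (simp add: A3_def)
    have split: "prs m = A3 \<union> (A2 \<union> A1)"
      using assms(4) by (auto simp: prs_def A1_def A2_def A3_def)
    have "Pfac \<zeta> s m lam = prod f (prs m)" unfolding Pfac_def f_def prs_def ..
    also have "\<dots> = prod f A3 * (prod f A2 * prod f A1)"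
      unfolding split using fin1 fin2 fin3
      by (subst prod.union_disjoint, simp_all, force simp: A1_def A2_def A3_def,
          subst prod.union_disjoint, simp_all, force simp: A1_def A2_def A3_def)
    also have "prod f A1 = prod g A1"
      by (intro prod.cong refl) (auto simp: A1_def f_def g_def eps_def algebra_simps)
    also have "prod f A2 = prod g A2"
      by (intro prod.cong refl) (auto simp: A2_def f_def g_def eps_def algebra_simps)
    also have "prod f A3 = (\<Prod>(k, j)\<in>A3. 1 / sinh (lam j - lam k))"
    proof (intro prod.cong refl)
      have aa: "a / (a * a) = 1 / a" for a :: complex by (cases "a = 0") simp_all
      fix x assume "x \<in> A3"
      then show "f x = (case x of (k, j) \<Rightarrow> 1 / sinh (lam j - lam k))"
        by (auto simp: A3_def f_def eps_def aa)
    qed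
    also have "(\<Prod>(k, j)\<in>A3. 1 / sinh (lam j - lam k)) = (\<Prod>k\<in>{1..s}. \<Prod>j\<in>{s+1..m}. 1 / sinh (lam j - lam k))"
      unfolding A3_def by (rule prod.cartesian_product[symmetric])
    finally show ?thesis unfolding Theta_def g_def A1_def A2_def by (simp add: mult_ac)
  qed
  have "G \<zeta> s m lam xi = Pfac \<zeta> s m lam * Z \<zeta> m lam xi / (fct * (of_real (sin \<zeta>)) ^ m)"
  proof -
    have "fct * G \<zeta> s m lam xi / Pfac \<zeta> s m lam = Z \<zeta> m lam xi / (of_real (sin \<zeta>)) ^ m"
      using GT unfolding Gtilde_def fct_def[symmetric] .
    then show ?thesis using fct0 Pfac0 sin0 by (simp add: field_simps)
  qed
  then show ?thesis using GT PT unfolding fct_def by simp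
qed

end
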